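(* Let $\ell\ge2$ and $n\ge1$ be integers with $\gcd(n,\ell)=1$. Then each switching equivalence class in $\mathrm{Alt}_n(\mathbb{Z}/\ell\mathbb{Z})$ contains exactly one isomorphism class of modular Eulerian matrices; that is, every $M\in\mathrm{Alt}_n(\mathbb{Z}/\ell\mathbb{Z})$ is switching equivalent to some modular Eulerian matrix, and any two modular Eulerian matrices that are switching equivalent are isomorphic.
   Context: $\mathrm{Alt}_n(\mathbb{Z}/\ell\mathbb{Z})$ is the set of $n\times n$ matrices $M=(m_{ij})$ over $\mathbb{Z}/\ell\mathbb{Z}$ with $m_{ii}=0$ and $m_{ij}+m_{ji}=0$. For $v\in[n]$ let $X_v$ be the matrix with $(X_v)_{iv}=1$ and $(X_v)_{vi}=-1$ for all $i\ne v$ and all other entries $0$; the switching at $v$ is $\mu_v(M)=M+X_v$. $M\cong M'$ means there is $\sigma\in\mathfrak{S}_n$ with $m'_{\sigma(i)\sigma(j)}=m_{ij}$ for all $i,j$. $M,M'$ are switching equivalent if there are positive integers $i_1,\dots,i_n$ with $M'\cong\mu_1^{i_1}\cdots\mu_n^{i_n}(M)$. $M\in\mathrm{Alt}_n(\mathbb{Z}/\ell\mathbb{Z})$ is a modular Eulerian matrix if $\sum_{j=1}^n m_{ij}=0$ in $\mathbb{Z}/\ell\mathbb{Z}$ for every $i$. *)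

theory Defs
  imports "HOL-Combinatorics.Permutations"
begin

text \<open>Matrices over Z/lZ of size n x n: functions nat => nat => int, indices 0..n-1
  (standing for [n]), entries the canonical representatives in {0..<l}, and 0 outside
  the index range.\<close>

definition is_mat :: "int \<Rightarrow> nat \<Rightarrow> (nat \<Rightarrow> nat \<Rightarrow> int) \<Rightarrow> bool" where
  "is_mat l n M \<longleftrightarrow> (\<forall>i j. (i < n \<and> j < n \<longrightarrow> 0 \<le> M i j \<and> M i j < l)
                        \<and> (\<not> (i < n \<and> j < n) \<longrightarrow> M i j = 0))"

definition Alt :: "int \<Rightarrow> nat \<Rightarrow> (nat \<Rightarrow> nat \<Rightarrow> int) set" where
  "Alt l n = {M. is_mat l n M \<and> (\<forall>i<n. M i i = 0)
                 \<and> (\<forall>i<n. \<forall>j<n. (M i j + M j i) mod l = 0)}"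

definition Xmat :: "nat \<Rightarrow> nat \<Rightarrow> nat \<Rightarrow> nat \<Rightarrow> int" where
  "Xmat n v i j = (if i < n \<and> j < n \<and> i \<noteq> j then
                     (if j = v then 1 else if i = v then -1 else 0) else 0)"

definition mu :: "int \<Rightarrow> nat \<Rightarrow> nat \<Rightarrow> (nat \<Rightarrow> nat \<Rightarrow> int) \<Rightarrow> (nat \<Rightarrow> nat \<Rightarrow> int)" where
  "mu l n v M = (\<lambda>i j. (M i j + Xmat n v i j) mod l)"

text \<open>mu_1^{e_1} ... mu_n^{e_n} (M), indices shifted to 0..n-1 (innermost is the last one).\<close>
fun mu_seq :: "int \<Rightarrow> nat \<Rightarrow> (nat \<Rightarrow> nat) \<Rightarrow> nat \<Rightarrow> (nat \<Rightarrow> nat \<Rightarrow> int) \<Rightarrow> (nat \<Rightarrow> nat \<Rightarrow> int)" where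
  "mu_seq l n e 0 M = M"
| "mu_seq l n e (Suc k) M = mu_seq l n e k ((mu l n k ^^ e k) M)"

definition iso_mat :: "nat \<Rightarrow> (nat \<Rightarrow> nat \<Rightarrow> int) \<Rightarrow> (nat \<Rightarrow> nat \<Rightarrow> int) \<Rightarrow> bool" where
  "iso_mat n M M' \<longleftrightarrow> (\<exists>\<sigma>. \<sigma> permutes {0..<n} \<and>
                          (\<forall>i<n. \<forall>j<n. M' (\<sigma> i) (\<sigma> j) = M i j))"

definition switching_equiv :: "int \<Rightarrow> nat \<Rightarrow> (nat \<Rightarrow> nat \<Rightarrow> int) \<Rightarrow> (nat \<Rightarrow> nat \<Rightarrow> int) \<Rightarrow> bool" where
  "switching_equiv l n M M' \<longleftrightarrow>
     (\<exists>e. (\<forall>v<n. e v > 0) \<and> iso_mat n (mu_seq l n e n M) M')"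

definition modular_eulerian :: "int \<Rightarrow> nat \<Rightarrow> (nat \<Rightarrow> nat \<Rightarrow> int) \<Rightarrow> bool" where
  "modular_eulerian l n M \<longleftrightarrow> M \<in> Alt l n \<and> (\<forall>i<n. (\<Sum>j<n. M i j) mod l = 0)"

end

theory Submission
  imports Defs
begin

lemma pow_mu:
  assumes H: "\<forall>i j. M i j mod l = M i j"
  shows "(mu l n v ^^ k) M = (\<lambda>i j. (M i j + int k * Xmat n v i j) mod l)"
proof (induction k)
  case 0
  then show ?case using H by auto
next
  case (Suc k)
  have "(mu l n v ^^ Suc k) M = mu l n v ((mu l n v ^^ k) M)" by simp
  also have "\<dots> = mu l n v (\<lambda>i j. (M i j + int k * Xmat n v i j) mod l)" by (simp only: Suc.IH)
  also have "\<dots> = (\<lambda>i j. (M i j + int (Suc k) * Xmat n v i j) mod l)"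
  proof (rule ext, rule ext)
    fix i j
    have "((M i j + int k * Xmat n v i j) mod l + Xmat n v i j) mod l = (M i j + int k * Xmat n v i j + Xmat n v i j) mod l"
      by (rule mod_add_left_eq)
    then show "mu l n v (\<lambda>i j. (M i j + int k * Xmat n v i j) mod l) i j = (M i j + int (Suc k) * Xmat n v i j) mod l"
      by (simp add: mu_def algebra_simps)
  qed
  finally show ?case .
qed

lemma seq_closed:
  assumes H: "\<forall>i j. M i j mod l = M i j"
  shows "mu_seq l n e k M = (\<lambda>i j. (M i j + (\<Sum>v<k. int (e v) * Xmat n v i j)) mod l)"
  using H
proof (induction k arbitrary: M)
  case 0
  then show ?case by auto
next
  case (Suc k)
  let ?M1 = "(\<lambda>i j. (M i j + int (e k) * Xmat n k i j) mod l)"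
  have p: "(mu l n k ^^ e k) M = ?M1" using pow_mu[OF Suc.prems] .
  have h1: "\<forall>i j. ?M1 i j mod l = ?M1 i j" by simp
  show ?case
  proof (rule ext, rule ext)
    fix i j
    have "(?M1 i j + (\<Sum>v<k. int (e v) * Xmat n v i j)) mod l = (M i j + int (e k) * Xmat n k i j + (\<Sum>v<k. int (e v) * Xmat n v i j)) mod l"
      by (rule mod_add_left_eq)
    then show "mu_seq l n e (Suc k) M i j = (M i j + (\<Sum>v<Suc k. int (e v) * Xmat n v i j)) mod l"
      by (simp add: p Suc.IH[OF h1] algebra_simps)
  qed
qed

lemma Xsum:
  assumes "i < n" "j < n"
  shows "(\<Sum>v<n. int (e v) * Xmat n v i j) = int (e j) - int (e i)"
proof (cases "i = j")
  case True
  then show ?thesis by (simp add: Xmat_def)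
next
  case False
  have "\<forall>v. int (e v) * Xmat n v i j = (if v = j then int (e v) else 0) - (if v = i then int (e v) else 0)"
    using False assms by (auto simp: Xmat_def)
  then have "(\<Sum>v<n. int (e v) * Xmat n v i j) = (\<Sum>v<n. (if v = j then int (e v) else 0) - (if v = i then int (e v) else 0))"
    by simp
  also have "\<dots> = int (e j) - int (e i)"
    using assms by (simp add: sum_subtractf)
  finally show ?thesis .
qed

lemma mat_mod: "l \<ge> 2 \<Longrightarrow> is_mat l n M \<Longrightarrow> \<forall>i j. M i j mod l = M i j"
  unfolding is_mat_def by (metis mod_0 mod_pos_pos_trivial)

lemma seq_n:
  assumes "l \<ge> 2" "is_mat l n M" "i < n" "j < n"
  shows "mu_seq l n e n M i j = (M i j + int (e j) - int (e i)) mod l"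
proof -
  have "mu_seq l n e n M i j = (M i j + (\<Sum>v<n. int (e v) * Xmat n v i j)) mod l"
    using seq_closed[OF mat_mod[OF assms(1,2)], of n e] by simp
  also have "\<dots> = (M i j + (int (e j) - int (e i))) mod l" by (simp only: Xsum[OF assms(3,4), of e])
  finally show ?thesis by (simp add: algebra_simps)
qed

lemma seq_out:
  assumes "l \<ge> 2" "is_mat l n M" "\<not> (i < n \<and> j < n)"
  shows "mu_seq l n e n M i j = 0"
proof -
  have "(\<Sum>v<n. int (e v) * Xmat n v i j) = 0" using assms(3) by (auto simp: Xmat_def intro!: sum.neutral)
  then show ?thesis using seq_closed[OF mat_mod[OF assms(1,2)], of n e] assms
    by (simp add: is_mat_def)
qed

lemma rowsum:
  assumes "l \<ge> 2" "is_mat l n M" "i < n"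
  shows "(\<Sum>j<n. mu_seq l n e n M i j) mod l
       = ((\<Sum>j<n. M i j) + (\<Sum>j<n. int (e j)) - int n * int (e i)) mod l"
proof -
  have "(\<Sum>j<n. mu_seq l n e n M i j) mod l = (\<Sum>j<n. (M i j + int (e j) - int (e i)) mod l) mod l"
    using seq_n[OF assms(1,2,3)] by simp
  also have "\<dots> = (\<Sum>j<n. M i j + int (e j) - int (e i)) mod l"
    by (rule mod_sum_eq)
  also have "(\<Sum>j<n. M i j + int (e j) - int (e i)) = (\<Sum>j<n. M i j) + (\<Sum>j<n. int (e j)) - int n * int (e i)"
    by (simp add: sum.distrib sum_subtractf)
  finally show ?thesis .
qed

lemma total:
  assumes "M \<in> Alt l n"
  shows "k \<le> n \<Longrightarrow> (\<Sum>i<k. \<Sum>j<k. M i j) mod l = 0"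
proof (induction k)
  case 0
  then show ?case by simp
next
  case (Suc k)
  have kn: "k < n" using Suc by simp
  have eq: "(\<Sum>i<Suc k. \<Sum>j<Suc k. M i j) = (\<Sum>i<k. \<Sum>j<k. M i j) + (\<Sum>j<k. M k j + M j k) + M k k"
    by (simp add: sum.distrib algebra_simps)
  have d: "M k k = 0" using assms kn by (simp add: Alt_def)
  have "(\<Sum>j<k. (M k j + M j k) mod l) = 0"
    using assms kn by (auto simp: Alt_def intro!: sum.neutral)
  then have s: "(\<Sum>j<k. M k j + M j k) mod l = 0"
    by (metis mod_sum_eq mod_0)
  have "(\<Sum>i<Suc k. \<Sum>j<Suc k. M i j) mod l
      = ((\<Sum>i<k. \<Sum>j<k. M i j) mod l + (\<Sum>j<k. M k j + M j k) mod l) mod l"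
    unfolding eq d by (simp add: mod_add_eq)
  also have "\<dots> = 0" using Suc s by simp
  finally show ?case .
qed


lemma existence:
  fixes l :: int and n :: nat
  assumes l2: "l \<ge> 2" and cop: "gcd (int n) l = 1" and MA: "M \<in> Alt l n"
  shows "\<exists>M'. modular_eulerian l n M' \<and> switching_equiv l n M M'"
proof -
  obtain u v where uv: "u * int n + v * l = 1" using bezout_int[of "int n" l] cop by auto
  define r where "r i = (\<Sum>j<n. M i j)" for i
  define e where "e i = nat ((u * r i) mod l) + nat l" for i
  define N where "N = mu_seq l n e n M"
  have ismat: "is_mat l n M" using MA by (simp add: Alt_def)
  have epos: "\<forall>v<n. e v > 0" using l2 by (simp add: e_def)
  have ei: "int (e i) = u * r i - l * (u * r i div l) + l" for i
  proof -
    have "0 \<le> (u * r i) mod l" using l2 by simp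
    then show ?thesis using l2 by (simp add: e_def minus_div_mult_eq_mod[symmetric] algebra_simps)
  qed
  have E: "(\<Sum>j<n. int (e j)) = u * (\<Sum>j<n. r j) + l * (\<Sum>j<n. 1 - u * r j div l)"
    by (simp add: ei sum.distrib sum_subtractf sum_distrib_left algebra_simps)
  have "(\<Sum>j<n. r j) mod l = 0" using total[OF MA, of n] by (simp add: r_def)
  then obtain t where t: "(\<Sum>j<n. r j) = l * t" by auto
  have NA: "N \<in> Alt l n"
  proof -
    have "is_mat l n N"
      unfolding is_mat_def
    proof (intro allI conjI impI)
      fix i j assume "i < n \<and> j < n"
      then show "0 \<le> N i j" "N i j < l" using seq_n[OF l2 ismat] l2 by (auto simp: N_def)
    next
      fix i j assume "\<not> (i < n \<and> j < n)"
      then show "N i j = 0" using seq_out[OF l2 ismat] by (simp add: N_def)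
    qed
    moreover have "\<forall>i<n. N i i = 0"
      using seq_n[OF l2 ismat] MA by (simp add: N_def Alt_def)
    moreover have "\<forall>i<n. \<forall>j<n. (N i j + N j i) mod l = 0"
    proof (intro allI impI)
      fix i j assume ij: "i < n" "j < n"
      have "(N i j + N j i) mod l = ((M i j + int (e j) - int (e i)) + (M j i + int (e i) - int (e j))) mod l"
        using seq_n[OF l2 ismat] ij by (simp add: N_def mod_add_eq)
      also have "\<dots> = (M i j + M j i) mod l" by simp
      also have "\<dots> = 0" using MA ij by (simp add: Alt_def)
      finally show "(N i j + N j i) mod l = 0" .
    qed
    ultimately show ?thesis by (simp add: Alt_def)
  qed
  have rows: "\<forall>i<n. (\<Sum>j<n. N i j) mod l = 0"
  proof (intro allI impI)
    fix i assume i: "i < n"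
    define D where "D = u * r i div l"
    define Q where "Q = (\<Sum>j<n. 1 - u * r j div l)"
    have "r i + (\<Sum>j<n. int (e j)) - int n * int (e i)
        = r i + u * (l * t) + l * Q - int n * (u * r i - l * D + l)"
      unfolding E t Q_def D_def by (simp only: ei)
    also have "\<dots> = r i - (u * int n) * r i + l * (u * t + Q + int n * D - int n)"
      by (simp add: algebra_simps)
    also have "\<dots> = l * (v * r i + u * t + Q + int n * D - int n)"
    proof -
      have un: "u * int n = 1 - v * l" using uv by linarith
      have "r i - (u * int n) * r i = l * (v * r i)" unfolding un by (simp add: algebra_simps)
      then show ?thesis by (simp add: algebra_simps)
    qed
    finally have "(r i + (\<Sum>j<n. int (e j)) - int n * int (e i)) mod l = 0" by simp
    then show "(\<Sum>j<n. N i j) mod l = 0"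
      using rowsum[OF l2 ismat i, of e] by (simp add: N_def r_def)
  qed
  have "modular_eulerian l n N" using NA rows by (simp add: modular_eulerian_def)
  moreover have "switching_equiv l n M N"
  proof -
    have "iso_mat n N N" unfolding iso_mat_def by (auto intro!: exI[of _ id] permutes_id)
    then show ?thesis using epos unfolding switching_equiv_def N_def by blast
  qed
  ultimately show ?thesis by blast
qed


lemma uniqueness:
  fixes l :: int and n :: nat
  assumes l2: "l \<ge> 2" and cop: "gcd (int n) l = 1"
    and ME: "modular_eulerian l n M" and ME': "modular_eulerian l n M'"
    and SE: "switching_equiv l n M M'"
  shows "iso_mat n M M'"
proof -
  obtain e \<sigma> where sig: "\<sigma> permutes {0..<n}"
    and iso: "\<forall>i<n. \<forall>j<n. M' (\<sigma> i) (\<sigma> j) = mu_seq l n e n M i j"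
    using SE unfolding switching_equiv_def iso_mat_def by blast
  define N where "N = mu_seq l n e n M"
  have ismat: "is_mat l n M" using ME by (simp add: modular_eulerian_def Alt_def)
  have sigb: "bij_betw \<sigma> {..<n} {..<n}"
    using permutes_imp_bij[OF sig] by (simp add: atLeast0LessThan)
  have key: "l dvd (\<Sum>j<n. int (e j)) - int n * int (e i)" if i: "i < n" for i
  proof -
    have si: "\<sigma> i < n" using permutes_in_image[OF sig] i by simp
    have "(\<Sum>j<n. N i j) = (\<Sum>j<n. M' (\<sigma> i) (\<sigma> j))"
      using iso i by (simp add: N_def)
    also have "\<dots> = (\<Sum>j<n. M' (\<sigma> i) j)"
      using sum.reindex_bij_betw[OF sigb, of "M' (\<sigma> i)"] by simp
    finally have "(\<Sum>j<n. N i j) mod l = 0"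
      using ME' si by (simp add: modular_eulerian_def)
    then have "((\<Sum>j<n. M i j) + (\<Sum>j<n. int (e j)) - int n * int (e i)) mod l = 0"
      using rowsum[OF l2 ismat i, of e] by (simp add: N_def)
    moreover have "(\<Sum>j<n. M i j) mod l = 0" using ME i by (simp add: modular_eulerian_def)
    ultimately have "l dvd ((\<Sum>j<n. M i j) + (\<Sum>j<n. int (e j)) - int n * int (e i))"
      "l dvd (\<Sum>j<n. M i j)" by auto
    then have "l dvd ((\<Sum>j<n. M i j) + (\<Sum>j<n. int (e j)) - int n * int (e i)) - (\<Sum>j<n. M i j)"
      using dvd_diff by blast
    then show ?thesis by simp
  qed
  have cl: "coprime l (int n)" using cop by (simp add: coprime_iff_gcd_eq_1 gcd.commute)
  have eq: "N i j = M i j" if ij: "i < n" "j < n" for i j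
  proof -
    have "l dvd ((\<Sum>j<n. int (e j)) - int n * int (e i)) - ((\<Sum>j<n. int (e j)) - int n * int (e j))"
      using key ij dvd_diff by blast
    then have "l dvd int n * (int (e j) - int (e i))" by (simp add: algebra_simps)
    then have "l dvd (int (e j) - int (e i))" using coprime_dvd_mult_right_iff[OF cl] by blast
    then obtain k where k: "int (e j) - int (e i) = l * k" by blast
    have "N i j = (M i j + (int (e j) - int (e i))) mod l"
      using seq_n[OF l2 ismat ij, of e] by (simp add: N_def algebra_simps)
    also have "\<dots> = M i j mod l" by (simp add: k)
    also have "\<dots> = M i j" using mat_mod[OF l2 ismat] by simp
    finally show ?thesis .
  qed
  show ?thesis unfolding iso_mat_def using sig iso eq by (auto simp: N_def)
qed

theorem theorem4p4:
  fixes l :: int and n :: nat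
  assumes "l \<ge> 2" and "n \<ge> 1" and "gcd (int n) l = 1"
  shows "(\<forall>M \<in> Alt l n. \<exists>M'. modular_eulerian l n M' \<and> switching_equiv l n M M')
       \<and> (\<forall>M M'. modular_eulerian l n M \<and> modular_eulerian l n M' \<and> switching_equiv l n M M'
                \<longrightarrow> iso_mat n M M')"
  using existence[OF assms(1,3)] uniqueness[OF assms(1,3)] by blast

end
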